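(* Let $n\geq 3$, $p,q>0$ with $pq>1$, $\alpha\in(0,n)$ and $\sigma_1,\sigma_2\in[0,\alpha)$, and consider the system $$u(x)=\int_{\mathbb{R}^n}\frac{v(y)^q}{|x-y|^{n-\alpha}|y|^{\sigma_1}}\,dy,\qquad v(x)=\int_{\mathbb{R}^n}\frac{u(y)^p}{|x-y|^{n-\alpha}|y|^{\sigma_2}}\,dy,\qquad x\in\mathbb{R}^n.$$ (i) If $u,v$ are bounded and decaying positive solutions of this system, then there exists a constant $C>0$ such that, as $|x|\to\infty$, $u(x)\leq C|x|^{-q_0}$ and $v(x)\leq C|x|^{-p_0}$. (ii) Suppose $q\geq p$ and $\sigma_1\geq\sigma_2$, and let $u,v$ be positive solutions of the system. Then there exists a constant $c>0$ such that, as $|x|\to\infty$, $$u(x)\geq \frac{c}{|x|^{n-\alpha}}\quad\text{and}\quad v(x)\geq \frac{c}{|x|^{\min\{n-\alpha,\ p(n-\alpha)-(\alpha-\sigma_2)\}}}.$$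
   Context: A positive solution is a pair of positive functions $u,v$ on $\mathbb{R}^n$ satisfying both equations. Define $$p_0=\frac{\alpha(1+p)-(\sigma_2+\sigma_1p)}{pq-1},\qquad q_0=\frac{\alpha(1+q)-(\sigma_1+\sigma_2q)}{pq-1}.$$ The notation $f(x)\simeq g(x)$ means that there exist constants $c,C>0$ with $cg(x)\leq f(x)\leq Cg(x)$ as $|x|\to\infty$. A positive solution $u,v$ is called decaying if $u(x)\simeq|x|^{-\theta_1}$ and $v(x)\simeq|x|^{-\theta_2}$ for some $\theta_1,\theta_2>0$. *)

theory Defs
  imports "HOL-Analysis.Analysis"
begin

definition weighted_riesz ::
  "real \<Rightarrow> real \<Rightarrow> (real^'n \<Rightarrow> real) \<Rightarrow> real^'n \<Rightarrow> ennreal" where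
  "weighted_riesz \<alpha> \<sigma> f x =
     (\<integral>\<^sup>+ y. ennreal (f y / (norm (x - y) powr (real CARD('n) - \<alpha>) * norm y powr \<sigma>)) \<partial>lborel)"

text \<open>A positive solution: positive measurable u, v with
  u(x) = int v(y)^q / (|x-y|^(n-alpha) |y|^sigma1) dy and
  v(x) = int u(y)^p / (|x-y|^(n-alpha) |y|^sigma2) dy for every x
  (the integrals being finite, since u, v are real-valued).\<close>
definition positive_solution ::
  "real \<Rightarrow> real \<Rightarrow> real \<Rightarrow> real \<Rightarrow> real \<Rightarrow> (real^'n \<Rightarrow> real) \<Rightarrow> (real^'n \<Rightarrow> real) \<Rightarrow> bool" where
  "positive_solution p q \<alpha> \<sigma>\<^sub>1 \<sigma>\<^sub>2 u v \<longleftrightarrow>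
     (\<forall>x. u x > 0) \<and> (\<forall>x. v x > 0) \<and>
     u \<in> borel_measurable lborel \<and> v \<in> borel_measurable lborel \<and>
     (\<forall>x. ennreal (u x) = weighted_riesz \<alpha> \<sigma>\<^sub>1 (\<lambda>y. v y powr q) x) \<and>
     (\<forall>x. ennreal (v x) = weighted_riesz \<alpha> \<sigma>\<^sub>2 (\<lambda>y. u y powr p) x)"

definition decays_like :: "(real^'n \<Rightarrow> real) \<Rightarrow> real \<Rightarrow> bool" where
  "decays_like f \<theta> \<longleftrightarrow> (\<exists>c C. c > 0 \<and> C > 0 \<and>
     (\<forall>\<^sub>F x in at_infinity. c * norm x powr (-\<theta>) \<le> f x \<and> f x \<le> C * norm x powr (-\<theta>)))"

definition decaying :: "(real^'n \<Rightarrow> real) \<Rightarrow> (real^'n \<Rightarrow> real) \<Rightarrow> bool" where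
  "decaying u v \<longleftrightarrow> (\<exists>\<theta>\<^sub>1 \<theta>\<^sub>2. \<theta>\<^sub>1 > 0 \<and> \<theta>\<^sub>2 > 0 \<and> decays_like u \<theta>\<^sub>1 \<and> decays_like v \<theta>\<^sub>2)"

definition p0 :: "real \<Rightarrow> real \<Rightarrow> real \<Rightarrow> real \<Rightarrow> real \<Rightarrow> real" where
  "p0 p q \<alpha> \<sigma>\<^sub>1 \<sigma>\<^sub>2 = (\<alpha> * (1 + p) - (\<sigma>\<^sub>2 + \<sigma>\<^sub>1 * p)) / (p * q - 1)"

definition q0 :: "real \<Rightarrow> real \<Rightarrow> real \<Rightarrow> real \<Rightarrow> real \<Rightarrow> real" where
  "q0 p q \<alpha> \<sigma>\<^sub>1 \<sigma>\<^sub>2 = (\<alpha> * (1 + q) - (\<sigma>\<^sub>1 + \<sigma>\<^sub>2 * q)) / (p * q - 1)"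

end

theory Submission
  imports Defs
begin


lemma ball_minus_pt_measure:
  fixes x :: "real^'n"
  assumes "0 < r"
  shows "emeasure lborel (ball x r - {x}) = ennreal (unit_ball_vol (real CARD('n)) * r ^ CARD('n))"
proof -
  have "emeasure lborel (ball x r - {x}) = emeasure lborel (ball x r)"
    by (rule emeasure_Diff_null_set) auto
  also have "\<dots> = ennreal (unit_ball_vol (real DIM(real^'n)) * r ^ DIM(real^'n))"
    using assms by (intro emeasure_ball) auto
  finally show ?thesis by simp
qed

lemma integral_lower:
  fixes x :: "real^'n" and g :: "real^'n \<Rightarrow> real"
  assumes "0 < r" "0 \<le> m" "\<And>y. y \<in> ball x r \<Longrightarrow> y \<noteq> x \<Longrightarrow> m \<le> g y"
  shows "ennreal (m * (unit_ball_vol (real CARD('n)) * r ^ CARD('n))) \<le> (\<integral>\<^sup>+ y. ennreal (g y) \<partial>lborel)"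
proof -
  have "(\<integral>\<^sup>+ y. ennreal m * indicator (ball x r - {x}) y \<partial>lborel) \<le> (\<integral>\<^sup>+ y. ennreal (g y) \<partial>lborel)"
    by (rule nn_integral_mono) (auto simp: indicator_def assms(3) ennreal_leI)
  moreover have "(\<integral>\<^sup>+ y. ennreal m * indicator (ball x r - {x}) y \<partial>lborel) = ennreal m * emeasure lborel (ball x r - {x})"
    by (rule nn_integral_cmult_indicator) auto
  moreover have "0 \<le> unit_ball_vol (real CARD('n)) * r ^ CARD('n)"
    using assms(1) by (intro mult_nonneg_nonneg) (auto intro: less_imp_le)
  ultimately show ?thesis using ball_minus_pt_measure[OF assms(1), of x] assms(2)
    by (simp add: ennreal_mult)
qed



lemma growth_contra:
  fixes K C a b R :: real
  assumes "K > 0" "\<And>t. t \<ge> R \<Longrightarrow> K * t powr a \<le> C * t powr b"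
  shows "a \<le> b"
proof (rule ccontr)
  assume "\<not> a \<le> b"
  hence ab: "a - b > 0" by simp
  define s where "s = 2 * \<bar>C\<bar> / K + 1"
  have s1: "s \<ge> 1" using assms(1) by (simp add: s_def)
  define t where "t = max (max R 1) (s powr (1/(a-b)))"
  have t1: "t \<ge> 1" "t \<ge> R" by (auto simp: t_def)
  have "s = (s powr (1/(a-b))) powr (a-b)" using ab s1 by (simp add: powr_powr)
  also have "\<dots> \<le> t powr (a-b)" using ab s1 by (intro powr_mono2) (auto simp: t_def)
  finally have st: "s \<le> t powr (a - b)" .
  have tb: "t powr b > 0" using t1 by simp
  have "t powr a = t powr b * t powr (a-b)" using t1 by (simp add: powr_add[symmetric])
  hence ka: "K * (t powr b * s) \<le> K * t powr a" using st tb assms(1) by (simp add: mult_left_mono)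
  have eq: "K * (t powr b * s) = t powr b * (2 * \<bar>C\<bar> + K)" using assms(1) by (simp add: s_def field_simps)
  have "C * t powr b \<le> \<bar>C\<bar> * t powr b" using tb by (intro mult_right_mono) auto
  also have "\<dots> < (2 * \<bar>C\<bar> + K) * t powr b" using tb assms(1)
    by (intro mult_strict_right_mono) auto
  also have "\<dots> \<le> K * t powr a" using ka eq by (metis mult.commute)
  finally show False using assms(2)[OF t1(2)] by simp
qed



lemma local_lower:
  fixes u v :: "real^'n \<Rightarrow> real"
  assumes eq: "\<forall>x. ennreal (u x) = weighted_riesz \<alpha> \<sigma> (\<lambda>y. v y powr q) x"
    and upos: "\<forall>x. u x > 0"
    and q: "q > 0" and na: "real CARD('n) - \<alpha> > 0" and sg: "\<sigma> \<ge> 0"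
    and cv: "cv > 0" and th: "\<theta>2 \<ge> 0"
    and vlow: "\<forall>y. norm y \<ge> R \<longrightarrow> cv * norm y powr (-\<theta>2) \<le> v y"
  shows "\<exists>K>0. \<forall>x. norm x \<ge> max (2*R) 1 \<longrightarrow> K * norm x powr (\<alpha> - \<sigma> - q*\<theta>2) \<le> u x"
proof -
  define N where "N = real CARD('n)"
  define V where "V = unit_ball_vol N"
  have Vpos: "V > 0" by (simp add: V_def N_def)
  define A where "A = cv * (3/2) powr (-\<theta>2)"
  have Apos: "A > 0" using cv by (simp add: A_def)
  define K where "K = A powr q / ((1/2) powr (N-\<alpha>) * (3/2) powr \<sigma>) * V * (1/2)^CARD('n)"
  have Kpos: "K > 0" using Apos Vpos by (simp add: K_def)
  have "\<forall>x. norm x \<ge> max (2*R) 1 \<longrightarrow> K * norm x powr (\<alpha> - \<sigma> - q*\<theta>2) \<le> u x"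
  proof (intro allI impI)
    fix x :: "real^'n" assume tR: "max (2*R) 1 \<le> norm x"
    define t where "t = norm x"
    have nx: "norm x = t" by (simp add: t_def)
    have t1: "t \<ge> 1" and tR1: "t \<ge> 2*R" using tR by (auto simp: t_def)
    have tpos: "t > 0" using t1 by simp
    define m where "m = (A * t powr (-\<theta>2)) powr q / ((1/2) powr (N-\<alpha>) * t powr (N-\<alpha>) * ((3/2) powr \<sigma> * t powr \<sigma>))"
    have mnn: "m \<ge> 0" using Apos tpos by (simp add: m_def)
    have bound: "m \<le> v y powr q / (norm (x - y) powr (real CARD('n) - \<alpha>) * norm y powr \<sigma>)"
      if y: "y \<in> ball x (t/2)" "y \<noteq> x" for y
    proof -
      have dxy: "norm (x - y) < t/2" using y(1) by (simp add: dist_norm)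
      have dxy0: "norm (x - y) > 0" using y(2) by simp
      have ny1: "norm y \<ge> t/2" using norm_triangle_sub[of x y] dxy nx by linarith
      have ny2: "norm y \<le> (3/2) * t" using norm_triangle_sub[of y x] dxy nx norm_minus_commute[of x y] by linarith
      have nyR: "norm y \<ge> R" using ny1 tR1 by simp
      have ny0: "norm y > 0" using ny1 tpos by linarith
      have pm: "((3/2)*t) powr (-\<theta>2) = (3/2) powr (-\<theta>2) * t powr (-\<theta>2)"
        using tpos by (intro powr_mult; auto)
      have "A * t powr (-\<theta>2) = cv * ((3/2) * t) powr (-\<theta>2)"
        by (simp only: A_def pm mult.assoc)
      also have "\<dots> \<le> cv * norm y powr (-\<theta>2)"
        using cv ny0 ny2 th by (intro mult_left_mono powr_mono2') auto
      also have "\<dots> \<le> v y" using vlow nyR by auto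
      finally have vb: "A * t powr (-\<theta>2) \<le> v y" .
      have num: "(A * t powr (-\<theta>2)) powr q \<le> v y powr q"
        using vb Apos q by (intro powr_mono2) auto
      have d1: "norm (x - y) powr (N - \<alpha>) \<le> (1/2) powr (N-\<alpha>) * t powr (N-\<alpha>)"
      proof -
        have "norm (x - y) powr (N - \<alpha>) \<le> ((1/2) * t) powr (N - \<alpha>)"
          using dxy na by (intro powr_mono2) (auto simp: N_def)
        moreover have "((1/2) * t) powr (N - \<alpha>) = (1/2) powr (N-\<alpha>) * t powr (N-\<alpha>)"
          using tpos by (intro powr_mult; auto)
        ultimately show ?thesis by simp
      qed
      have d2: "norm y powr \<sigma> \<le> (3/2) powr \<sigma> * t powr \<sigma>"
      proof -
        have "norm y powr \<sigma> \<le> ((3/2) * t) powr \<sigma>"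
          using ny2 sg by (intro powr_mono2) auto
        moreover have "((3/2) * t) powr \<sigma> = (3/2) powr \<sigma> * t powr \<sigma>"
          using tpos by (intro powr_mult; auto)
        ultimately show ?thesis by simp
      qed
      have dpos: "0 < norm (x - y) powr (N - \<alpha>) * norm y powr \<sigma>" using dxy0 ny0 by simp
      have "m \<le> v y powr q / (norm (x - y) powr (N - \<alpha>) * norm y powr \<sigma>)"
        unfolding m_def
        by (rule frac_le) (use num dpos d1 d2 vb Apos tpos in \<open>auto intro: mult_mono\<close>)
      thus ?thesis by (simp add: N_def)
    qed
    have "ennreal (m * (unit_ball_vol (real CARD('n)) * (t/2) ^ CARD('n))) \<le> ennreal (u x)"
      unfolding eq[rule_format] weighted_riesz_def
      by (rule integral_lower) (use tpos mnn bound in auto)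
    hence lo: "m * (V * (t/2) ^ CARD('n)) \<le> u x" using upos[rule_format, of x] ennreal_le_iff[of "u x"] by (simp add: V_def N_def)
    have meq: "m * (V * (t/2) ^ CARD('n)) = K * t powr (\<alpha> - \<sigma> - q*\<theta>2)"
    proof -
      have e1: "(A * t powr (-\<theta>2)) powr q = A powr q * t powr (-\<theta>2 * q)"
        using Apos tpos by (simp add: powr_mult powr_powr)
      have e2: "(t/2) ^ CARD('n) = (1/2)^CARD('n) * t powr N"
        using tpos by (simp add: N_def powr_realpow power_divide)
      have e3: "t powr (\<alpha> - \<sigma> - q*\<theta>2) * (t powr (N-\<alpha>) * t powr \<sigma>) = t powr (-\<theta>2 * q) * t powr N"
        using tpos by (simp add: powr_add[symmetric] algebra_simps)
      have tp: "t powr (N-\<alpha>) > 0" "t powr \<sigma> > 0" using tpos by auto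
      show ?thesis unfolding m_def K_def e1 e2
        using e3 tp by (simp add: field_simps)
    qed
    show "K * norm x powr (\<alpha> - \<sigma> - q*\<theta>2) \<le> u x" using lo meq by (simp add: t_def)
  qed
  thus ?thesis using Kpos by blast
qed

lemma decay_step:
  fixes u v :: "real^'n \<Rightarrow> real"
  assumes eq: "\<forall>x. ennreal (u x) = weighted_riesz \<alpha> \<sigma> (\<lambda>y. v y powr q) x"
    and upos: "\<forall>x. u x > 0"
    and q: "q > 0" and na: "real CARD('n) - \<alpha> > 0" and sg: "\<sigma> \<ge> 0"
    and cv: "cv > 0" and th: "\<theta>2 \<ge> 0"
    and vlow: "\<forall>y. norm y \<ge> R \<longrightarrow> cv * norm y powr (-\<theta>2) \<le> v y"
    and uup: "\<forall>x. norm x \<ge> R' \<longrightarrow> u x \<le> Cu * norm x powr (-\<theta>1)"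
  shows "\<theta>1 \<le> q*\<theta>2 + \<sigma> - \<alpha>"
proof -
  obtain K where K: "K > 0" "\<forall>x. norm x \<ge> max (2*R) 1 \<longrightarrow> K * norm x powr (\<alpha> - \<sigma> - q*\<theta>2) \<le> u x"
    using local_lower[OF eq upos q na sg cv th vlow] by blast
  have "\<alpha> - \<sigma> - q*\<theta>2 \<le> -\<theta>1"
  proof (rule growth_contra[OF K(1), of "max (max (2*R) 1) R'" _ Cu])
    fix t :: real assume tR: "max (max (2*R) 1) R' \<le> t"
    hence tpos: "t \<ge> 0" by auto
    obtain x :: "real^'n" where nx: "norm x = t" using vector_choose_size[of t] tpos by auto
    have "K * t powr (\<alpha> - \<sigma> - q*\<theta>2) \<le> u x" using K(2) nx tR by auto
    also have "u x \<le> Cu * t powr (-\<theta>1)" using uup nx tR by auto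
    finally show "K * t powr (\<alpha> - \<sigma> - q*\<theta>2) \<le> Cu * t powr (-\<theta>1)" .
  qed
  thus ?thesis by simp
qed



lemma frac_aux:
  fixes a ny d s :: real
  assumes "0 \<le> a" "0 \<le> ny" "0 < d" "d \<le> s"
  shows "a / ny * (1/s) \<le> a / (d * ny)"
proof (cases "ny = 0")
  case False
  hence "ny > 0" using assms by simp
  thus ?thesis using assms by (simp add: field_simps mult_left_mono mult_right_mono)
qed simp

lemma lower_origin:
  fixes u v :: "real^'n \<Rightarrow> real"
  assumes eq: "\<forall>x. ennreal (u x) = weighted_riesz \<alpha> \<sigma> (\<lambda>y. v y powr q) x"
    and vpos: "\<forall>y. v y > 0" and vm: "v \<in> borel_measurable lborel"
    and upos: "\<forall>x. u x > 0"
    and na: "real CARD('n) - \<alpha> > 0"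
  shows "\<exists>c>0. \<forall>x. norm x \<ge> 1 \<longrightarrow> c / norm x powr (real CARD('n) - \<alpha>) \<le> u x"
proof -
  define N where "N = real CARD('n)"
  define w where "w y = ennreal (v y powr q / norm y powr \<sigma> * indicator (ball 0 1) y)" for y :: "real^'n"
  have bb[measurable]: "ball (0::real^'n) 1 \<in> sets borel" by simp
  have wm: "w \<in> borel_measurable lborel" unfolding w_def using vm by measurable
  define I where "I = (\<integral>\<^sup>+ y. w y \<partial>lborel)"
  have I0: "I \<noteq> 0"
  proof
    assume "I = 0"
    hence ae: "AE y in lborel. w y = 0" unfolding I_def using nn_integral_0_iff_AE[OF wm] by simp
    have "w y \<noteq> 0" if "y \<in> ball 0 1 - {0}" for y
      using that vpos[rule_format, of y] by (simp add: w_def)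
    hence nz: "\<forall>y. w y = 0 \<longrightarrow> y \<notin> ball 0 1 - {0}" by blast
    have "AE y in lborel. y \<notin> ball (0::real^'n) 1 - {0}"
      by (rule eventually_mono[OF ae]) (use nz in blast)
    hence "emeasure lborel (ball (0::real^'n) 1 - {0}) = 0"
      by (subst (asm) AE_iff_measurable[of "ball 0 1 - {0}"]) auto
    moreover have "emeasure lborel (ball (0::real^'n) 1 - {0}) > 0"
      using ball_minus_pt_measure[of 1 "0::real^'n"] by simp
    ultimately show False by simp
  qed
  obtain c0 where c0: "c0 > 0" "ennreal c0 \<le> I"
  proof (cases "I = top")
    case True thus ?thesis using that[of 1] by simp
  next
    case False
    hence "ennreal (enn2real I) = I" apply (rule_tac ennreal_enn2real) apply (simp add: top.not_eq_extremum) done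
    moreover have "enn2real I > 0" using I0 False by (simp add: enn2real_positive_iff top.not_eq_extremum zero_less_iff_neq_zero)
    ultimately show ?thesis using that[of "enn2real I"] by simp
  qed
  define c where "c = c0 / 2 powr (N - \<alpha>)"
  have cpos: "c > 0" using c0 by (simp add: c_def)
  have "\<forall>x. norm x \<ge> 1 \<longrightarrow> c / norm x powr (real CARD('n) - \<alpha>) \<le> u x"
  proof (intro allI impI)
    fix x :: "real^'n" assume x1: "norm x \<ge> 1"
    define s where "s = (2 * norm x) powr (N - \<alpha>)"
    have x0: "x \<noteq> 0" using x1 by auto
    have spos: "s > 0" using x0 by (simp add: s_def)
    have pw: "w y * ennreal (1/s) \<le> ennreal (v y powr q / (norm (x - y) powr (real CARD('n) - \<alpha>) * norm y powr \<sigma>))" for y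
    proof (cases "y \<in> ball 0 1")
      case False thus ?thesis by (simp add: w_def)
    next
      case True
      hence ny: "norm y < 1" by simp
      have d0: "norm (x - y) > 0" using norm_triangle_sub[of x y] ny x1 by linarith
      have d1: "norm (x - y) \<le> 2 * norm x" using norm_triangle_ineq4[of x y] ny x1 by linarith
      have ds: "norm (x - y) powr (N - \<alpha>) \<le> s" unfolding s_def
        using d0 d1 na by (intro powr_mono2) (auto simp: N_def)
      have "v y powr q / norm y powr \<sigma> * (1/s) \<le> v y powr q / (norm (x - y) powr (N - \<alpha>) * norm y powr \<sigma>)"
        using d0 ds by (intro frac_aux) auto
      moreover have "w y * ennreal (1/s) = ennreal (v y powr q / norm y powr \<sigma> * (1/s))"
      proof -
        have "w y = ennreal (v y powr q / norm y powr \<sigma>)" using True by (simp add: w_def)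
        moreover have "0 \<le> v y powr q / norm y powr \<sigma>" by simp
        moreover have "0 \<le> 1/s" using spos by simp
        ultimately show ?thesis by (simp only: ennreal_mult)
      qed
      ultimately show ?thesis by (simp add: N_def)
    qed
    have "ennreal c0 * ennreal (1/s) \<le> I * ennreal (1/s)" using c0 by (intro mult_right_mono) auto
    also have "\<dots> = (\<integral>\<^sup>+ y. w y * ennreal (1/s) \<partial>lborel)"
      unfolding I_def by (rule nn_integral_multc[symmetric]) (rule wm)
    also have "\<dots> \<le> ennreal (u x)" unfolding eq[rule_format] weighted_riesz_def
      by (rule nn_integral_mono) (rule pw)
    finally have "ennreal (c0 / s) \<le> ennreal (u x)" using c0 spos by (simp add: ennreal_mult[symmetric])
    hence "c0 / s \<le> u x" using upos[rule_format, of x] ennreal_le_iff[of "u x"] by simp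
    moreover have "s = 2 powr (N - \<alpha>) * norm x powr (N - \<alpha>)" unfolding s_def
      by (intro powr_mult; auto)
    ultimately show "c / norm x powr (real CARD('n) - \<alpha>) \<le> u x" by (simp add: c_def N_def)
  qed
  thus ?thesis using cpos by blast
qed


lemma ev_inf:
  assumes "\<forall>\<^sub>F x in at_infinity. P (x::real^'n)"
  obtains R where "\<forall>x. norm x \<ge> R \<longrightarrow> P x"
  using assms unfolding eventually_at_infinity by blast

lemma ev_inf_intro:
  assumes "\<forall>x::real^'n. norm x \<ge> R \<longrightarrow> P x"
  shows "\<forall>\<^sub>F x in at_infinity. P x"
  unfolding eventually_at_infinity using assms by blast

theorem theorem1p1:
  fixes u v :: "real^'n \<Rightarrow> real" and p q \<alpha> \<sigma>\<^sub>1 \<sigma>\<^sub>2 :: real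
  assumes "CARD('n) \<ge> 3"
    and "p > 0" and "q > 0" and "p * q > 1"
    and "0 < \<alpha>" and "\<alpha> < real CARD('n)"
    and "0 \<le> \<sigma>\<^sub>1" and "\<sigma>\<^sub>1 < \<alpha>" and "0 \<le> \<sigma>\<^sub>2" and "\<sigma>\<^sub>2 < \<alpha>"
    and sol: "positive_solution p q \<alpha> \<sigma>\<^sub>1 \<sigma>\<^sub>2 u v"
  shows "((\<exists>M. \<forall>x. u x \<le> M) \<and> (\<exists>M. \<forall>x. v x \<le> M) \<and> decaying u v \<longrightarrow>
           (\<exists>C>0. \<forall>\<^sub>F x in at_infinity.
              u x \<le> C * norm x powr (- q0 p q \<alpha> \<sigma>\<^sub>1 \<sigma>\<^sub>2) \<and>
              v x \<le> C * norm x powr (- p0 p q \<alpha> \<sigma>\<^sub>1 \<sigma>\<^sub>2)))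
       \<and> (q \<ge> p \<and> \<sigma>\<^sub>1 \<ge> \<sigma>\<^sub>2 \<longrightarrow>
           (\<exists>c>0. \<forall>\<^sub>F x in at_infinity.
              u x \<ge> c / norm x powr (real CARD('n) - \<alpha>) \<and>
              v x \<ge> c / norm x powr (min (real CARD('n) - \<alpha>)
                                          (p * (real CARD('n) - \<alpha>) - (\<alpha> - \<sigma>\<^sub>2)))))"
proof -
  have upos: "\<forall>x. u x > 0" and vpos: "\<forall>x. v x > 0"
    and um: "u \<in> borel_measurable lborel" and vm: "v \<in> borel_measurable lborel"
    and eqU: "\<forall>x. ennreal (u x) = weighted_riesz \<alpha> \<sigma>\<^sub>1 (\<lambda>y. v y powr q) x"
    and eqV: "\<forall>x. ennreal (v x) = weighted_riesz \<alpha> \<sigma>\<^sub>2 (\<lambda>y. u y powr p) x"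
    using sol unfolding positive_solution_def by auto
  define N where "N = real CARD('n)"
  have na: "real CARD('n) - \<alpha> > 0" using assms(6) by simp
  have P1: "(\<exists>C>0. \<forall>\<^sub>F x in at_infinity.
              u x \<le> C * norm x powr (- q0 p q \<alpha> \<sigma>\<^sub>1 \<sigma>\<^sub>2) \<and>
              v x \<le> C * norm x powr (- p0 p q \<alpha> \<sigma>\<^sub>1 \<sigma>\<^sub>2))" if dec: "decaying u v"
  proof -
    obtain \<theta>1 \<theta>2 where th: "\<theta>1 > 0" "\<theta>2 > 0" "decays_like u \<theta>1" "decays_like v \<theta>2"
      using dec unfolding decaying_def by blast
    obtain c1 C1 where c1: "c1 > 0" "C1 > 0" and ev1: "\<forall>\<^sub>F x in at_infinity. c1 * norm x powr (-\<theta>1) \<le> u x \<and> u x \<le> C1 * norm x powr (-\<theta>1)"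
      using th(3) unfolding decays_like_def by blast
    obtain c2 C2 where c2: "c2 > 0" "C2 > 0" and ev2: "\<forall>\<^sub>F x in at_infinity. c2 * norm x powr (-\<theta>2) \<le> v x \<and> v x \<le> C2 * norm x powr (-\<theta>2)"
      using th(4) unfolding decays_like_def by blast
    obtain R1 where R1: "\<forall>x. norm x \<ge> R1 \<longrightarrow> c1 * norm x powr (-\<theta>1) \<le> u x \<and> u x \<le> C1 * norm x powr (-\<theta>1)"
      using ev1 by (rule ev_inf)
    obtain R2 where R2: "\<forall>x. norm x \<ge> R2 \<longrightarrow> c2 * norm x powr (-\<theta>2) \<le> v x \<and> v x \<le> C2 * norm x powr (-\<theta>2)"
      using ev2 by (rule ev_inf)
    have i1: "\<theta>1 \<le> q*\<theta>2 + \<sigma>\<^sub>1 - \<alpha>"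
      by (rule decay_step[OF eqU upos assms(3) na assms(7) c2(1), of \<theta>2 R2 R1 C1]) (use th R1 R2 in auto)
    have i2: "\<theta>2 \<le> p*\<theta>1 + \<sigma>\<^sub>2 - \<alpha>"
      by (rule decay_step[OF eqV vpos assms(2) na assms(9) c1(1), of \<theta>1 R1 R2 C2]) (use th R1 R2 in auto)
    have pq: "p*q - 1 > 0" using assms(4) by simp
    have "q*\<theta>2 \<le> q*(p*\<theta>1 + \<sigma>\<^sub>2 - \<alpha>)" using i2 assms(3) by (intro mult_left_mono) auto
    hence "\<theta>1 * (p*q - 1) \<ge> \<alpha> * (1 + q) - (\<sigma>\<^sub>1 + \<sigma>\<^sub>2 * q)" using i1 by (simp add: algebra_simps)
    hence g1: "q0 p q \<alpha> \<sigma>\<^sub>1 \<sigma>\<^sub>2 \<le> \<theta>1" unfolding q0_def using pq by (simp add: pos_divide_le_eq)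
    have "p*\<theta>1 \<le> p*(q*\<theta>2 + \<sigma>\<^sub>1 - \<alpha>)" using i1 assms(2) by (intro mult_left_mono) auto
    hence "\<theta>2 * (p*q - 1) \<ge> \<alpha> * (1 + p) - (\<sigma>\<^sub>2 + \<sigma>\<^sub>1 * p)" using i2 by (simp add: algebra_simps)
    hence g2: "p0 p q \<alpha> \<sigma>\<^sub>1 \<sigma>\<^sub>2 \<le> \<theta>2" unfolding p0_def using pq by (simp add: pos_divide_le_eq)
    have "\<forall>\<^sub>F x in at_infinity. u x \<le> max C1 C2 * norm x powr (- q0 p q \<alpha> \<sigma>\<^sub>1 \<sigma>\<^sub>2) \<and>
              v x \<le> max C1 C2 * norm x powr (- p0 p q \<alpha> \<sigma>\<^sub>1 \<sigma>\<^sub>2)"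
    proof (rule ev_inf_intro[of "max (max R1 R2) 1"], intro allI impI conjI)
      fix x :: "real^'n" assume xR: "max (max R1 R2) 1 \<le> norm x"
      have x1: "norm x \<ge> 1" using xR by simp
      have "u x \<le> C1 * norm x powr (-\<theta>1)" using R1 xR by auto
      also have "\<dots> \<le> C1 * norm x powr (- q0 p q \<alpha> \<sigma>\<^sub>1 \<sigma>\<^sub>2)"
        using c1 x1 g1 by (intro mult_left_mono powr_mono) auto
      also have "\<dots> \<le> max C1 C2 * norm x powr (- q0 p q \<alpha> \<sigma>\<^sub>1 \<sigma>\<^sub>2)"
        by (intro mult_right_mono) auto
      finally show "u x \<le> max C1 C2 * norm x powr (- q0 p q \<alpha> \<sigma>\<^sub>1 \<sigma>\<^sub>2)" .
      have "v x \<le> C2 * norm x powr (-\<theta>2)" using R2 xR by auto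
      also have "\<dots> \<le> C2 * norm x powr (- p0 p q \<alpha> \<sigma>\<^sub>1 \<sigma>\<^sub>2)"
        using c2 x1 g2 by (intro mult_left_mono powr_mono) auto
      also have "\<dots> \<le> max C1 C2 * norm x powr (- p0 p q \<alpha> \<sigma>\<^sub>1 \<sigma>\<^sub>2)"
        by (intro mult_right_mono) auto
      finally show "v x \<le> max C1 C2 * norm x powr (- p0 p q \<alpha> \<sigma>\<^sub>1 \<sigma>\<^sub>2)" .
    qed
    moreover have "max C1 C2 > 0" using c1 by simp
    ultimately show ?thesis by blast
  qed
  have P2: "\<exists>c>0. \<forall>\<^sub>F x in at_infinity.
              u x \<ge> c / norm x powr (real CARD('n) - \<alpha>) \<and>
              v x \<ge> c / norm x powr (min (real CARD('n) - \<alpha>)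
                                          (p * (real CARD('n) - \<alpha>) - (\<alpha> - \<sigma>\<^sub>2)))"
  proof -
    obtain cu where cu: "cu > 0" "\<forall>x. norm x \<ge> 1 \<longrightarrow> cu / norm x powr (real CARD('n) - \<alpha>) \<le> u x"
      using lower_origin[OF eqU vpos vm upos na] by blast
    obtain cv where cv: "cv > 0" "\<forall>x. norm x \<ge> 1 \<longrightarrow> cv / norm x powr (real CARD('n) - \<alpha>) \<le> v x"
      using lower_origin[OF eqV upos um vpos na] by blast
    have ulow: "\<forall>y. norm y \<ge> 1 \<longrightarrow> cu * norm y powr (-(real CARD('n) - \<alpha>)) \<le> u y"
      unfolding powr_minus_divide using cu(2) by simp
    obtain K where K: "K > 0" "\<forall>x. norm x \<ge> max (2*1) 1 \<longrightarrow> K * norm x powr (\<alpha> - \<sigma>\<^sub>2 - p*(real CARD('n) - \<alpha>)) \<le> v x"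
      using local_lower[OF eqV vpos assms(2) na assms(9) cu(1) _ ulow] na by auto
    define c where "c = min (min cu cv) K"
    have cpos: "c > 0" using cu cv K by (simp add: c_def)
    have "\<forall>\<^sub>F x in at_infinity.
              u x \<ge> c / norm x powr (real CARD('n) - \<alpha>) \<and>
              v x \<ge> c / norm x powr (min (real CARD('n) - \<alpha>)
                                          (p * (real CARD('n) - \<alpha>) - (\<alpha> - \<sigma>\<^sub>2)))"
    proof (rule ev_inf_intro[of 2], intro allI impI conjI)
      fix x :: "real^'n" assume x2: "2 \<le> norm x"
      hence x1: "norm x \<ge> 1" by simp
      have xp: "norm x > 0" using x2 by linarith
      have "c / norm x powr (real CARD('n) - \<alpha>) \<le> cu / norm x powr (real CARD('n) - \<alpha>)"
        using xp by (intro divide_right_mono) (auto simp: c_def)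
      also have "\<dots> \<le> u x" using cu(2) x1 by auto
      finally show "c / norm x powr (real CARD('n) - \<alpha>) \<le> u x" .
      show "c / norm x powr (min (real CARD('n) - \<alpha>) (p * (real CARD('n) - \<alpha>) - (\<alpha> - \<sigma>\<^sub>2))) \<le> v x"
      proof (cases "real CARD('n) - \<alpha> \<le> p * (real CARD('n) - \<alpha>) - (\<alpha> - \<sigma>\<^sub>2)")
        case True
        hence "min (real CARD('n) - \<alpha>) (p * (real CARD('n) - \<alpha>) - (\<alpha> - \<sigma>\<^sub>2)) = real CARD('n) - \<alpha>" by simp
        moreover have "c / norm x powr (real CARD('n) - \<alpha>) \<le> cv / norm x powr (real CARD('n) - \<alpha>)"
          using xp by (intro divide_right_mono) (auto simp: c_def)
        moreover have "cv / norm x powr (real CARD('n) - \<alpha>) \<le> v x" using cv(2) x1 by auto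
        ultimately show ?thesis by simp
      next
        case False
        hence mn: "min (real CARD('n) - \<alpha>) (p * (real CARD('n) - \<alpha>) - (\<alpha> - \<sigma>\<^sub>2)) = p * (real CARD('n) - \<alpha>) - (\<alpha> - \<sigma>\<^sub>2)" by simp
        have "c / norm x powr (p * (real CARD('n) - \<alpha>) - (\<alpha> - \<sigma>\<^sub>2)) \<le> K / norm x powr (p * (real CARD('n) - \<alpha>) - (\<alpha> - \<sigma>\<^sub>2))"
          using xp by (intro divide_right_mono) (auto simp: c_def)
        also have "\<dots> = K * norm x powr (- (p * (real CARD('n) - \<alpha>) - (\<alpha> - \<sigma>\<^sub>2)))"
          unfolding powr_minus_divide by simp
        also have "\<dots> = K * norm x powr (\<alpha> - \<sigma>\<^sub>2 - p*(real CARD('n) - \<alpha>))"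
          by (simp add: algebra_simps)
        also have "\<dots> \<le> v x" using K(2) x2 by auto
        finally show ?thesis using mn by simp
      qed
    qed
    thus ?thesis using cpos by blast
  qed
  show ?thesis using P1 P2 by blast
qed

end
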